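(* Let $v\in C^1([0,T];C^1(\mathcal K^* ))$ and $B\in C([0,T];C^0(\mathcal K^* ))$ satisfy $\frac{dv}{dt}+I_v(\tilde D_1v)+\tilde D_0B=0$. Let $\gamma\in C^1([0,T];C_1)$ be a dual 1-chain that is materially advected, $\frac{d\gamma}{dt}=\mathcal L^{\rm chain}_{v(t)}\gamma$, and that is a cycle at time $0$, $\partial\gamma(0)=0$. Then the discrete circulation $\Gamma(t)=v(t)(\gamma(t))=\sum_j\gamma_j(t)v_j(t)$ is constant: $\frac{d\Gamma}{dt}=0$.
   Context: $C^k(\mathcal K^* )$ is the space of real dual $k$-cochains on a cell complex and $C_k$ the space of real dual $k$-chains (same dimension), with pairing $\alpha(\gamma)=\sum_j\alpha_j\gamma_j$. $\tilde D_0:C^0\to C^1$, $\tilde D_1:C^1\to C^2$ are dual coboundary (incidence) matrices with $\tilde D_1\tilde D_0=0$; the boundary $\partial:C_1\to C_0$ is $\partial=\tilde D_0^T$, so $(\tilde D_0\phi)(\gamma)=\phi(\partial\gamma)$. For each velocity $v$ there are linear maps $I_v:C^2\to C^1$ (the discrete contraction, the same one appearing in the momentum equation) and $I_v^{(1)}:C^1\to C^0$. The discrete Lie derivative is defined by Cartan's formula: on 1-cochains $\mathcal L_v\alpha=\tilde D_0(I_v^{(1)}\alpha)+I_v(\tilde D_1\alpha)$, on 0-cochains $\mathcal L_v\phi=I_v^{(1)}(\tilde D_0\phi)$. The chain Lie derivative $\mathcal L_v^{\rm chain}$ on $C_1$ and on $C_0$ is the adjoint of $\mathcal L_v$ with respect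 to the pairing: $\alpha(\mathcal L_v^{\rm chain}\gamma)=(\mathcal L_v\alpha)(\gamma)$ for all cochains $\alpha$ of the corresponding degree. *)

theory Defs
  imports "HOL-Analysis.Analysis"
begin

text \<open>Dual cochain/chain spaces are modelled as real ^ 'n0, real ^ 'n1, real ^ 'n2
  (the k-cochains and the k-chains have the same dimension).
  D0 :: real^'n0^'n1 is the dual coboundary C^0 -> C^1, D1 :: real^'n1^'n2 is C^1 -> C^2.
  The contractions are I v : C^2 -> C^1 and I1 v : C^1 -> C^0, for each velocity v in C^1.\<close>

definition pairing :: "real^'n \<Rightarrow> real^'n \<Rightarrow> real" where
  "pairing \<alpha> \<gamma> = (\<Sum>j\<in>UNIV. \<alpha> $ j * \<gamma> $ j)"

definition boundary :: "real^'n0^'n1 \<Rightarrow> real^'n1 \<Rightarrow> real^'n0" where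
  "boundary D0 \<gamma> = transpose D0 *v \<gamma>"

text \<open>Discrete Lie derivative via Cartan's formula.\<close>
definition lie1 :: "real^'n0^'n1 \<Rightarrow> real^'n1^'n2 \<Rightarrow> (real^'n1 \<Rightarrow> real^'n2 \<Rightarrow> real^'n1)
    \<Rightarrow> (real^'n1 \<Rightarrow> real^'n1 \<Rightarrow> real^'n0) \<Rightarrow> real^'n1 \<Rightarrow> real^'n1 \<Rightarrow> real^'n1" where
  "lie1 D0 D1 I I1 v \<alpha> = D0 *v (I1 v \<alpha>) + I v (D1 *v \<alpha>)"

definition lie0 :: "real^'n0^'n1 \<Rightarrow> (real^'n1 \<Rightarrow> real^'n1 \<Rightarrow> real^'n0)
    \<Rightarrow> real^'n1 \<Rightarrow> real^'n0 \<Rightarrow> real^'n0" where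
  "lie0 D0 I1 v \<phi> = I1 v (D0 *v \<phi>)"

definition lie_chain1 :: "real^'n0^'n1 \<Rightarrow> real^'n1^'n2 \<Rightarrow> (real^'n1 \<Rightarrow> real^'n2 \<Rightarrow> real^'n1)
    \<Rightarrow> (real^'n1 \<Rightarrow> real^'n1 \<Rightarrow> real^'n0) \<Rightarrow> real^'n1 \<Rightarrow> real^'n1 \<Rightarrow> real^'n1" where
  "lie_chain1 D0 D1 I I1 v \<gamma> =
     (THE c. \<forall>\<alpha>. pairing \<alpha> c = pairing (lie1 D0 D1 I I1 v \<alpha>) \<gamma>)"

definition lie_chain0 :: "real^'n0^'n1 \<Rightarrow> (real^'n1 \<Rightarrow> real^'n1 \<Rightarrow> real^'n0)
    \<Rightarrow> real^'n1 \<Rightarrow> real^'n0 \<Rightarrow> real^'n0" where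
  "lie_chain0 D0 I1 v c0 =
     (THE c. \<forall>\<phi>. pairing \<phi> c = pairing (lie0 D0 I1 v \<phi>) c0)"

definition circulation :: "real^'n1 \<Rightarrow> real^'n1 \<Rightarrow> real" where
  "circulation v \<gamma> = pairing v \<gamma>"

end

theory Submission
  imports Defs
begin

lemma pairing_inner: "pairing a b = a \<bullet> b"
  by (simp add: pairing_def inner_vec_def)

lemma lie1_linear:
  assumes "linear (I w)" "linear (I1 w)"
  shows "linear (lie1 D0 D1 I I1 w)"
proof -
  have "linear (\<lambda>\<alpha>. D0 *v (I1 w \<alpha>) + I w (D1 *v \<alpha>))"
    by (intro linear_compose_add linear_compose[of "I1 w" "(*v) D0", unfolded o_def]
          linear_compose[of "(*v) D1" "I w", unfolded o_def] assms matrix_vector_mul_linear)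
  then show ?thesis unfolding lie1_def[abs_def] by simp
qed

lemma lie_chain1_eq:
  assumes "linear (I w)" "linear (I1 w)"
  shows "lie_chain1 D0 D1 I I1 w g = adjoint (lie1 D0 D1 I I1 w) g"
  unfolding lie_chain1_def pairing_inner
proof (rule the_equality)
  note lin = lie1_linear[of I w I1 D0 D1, OF assms]
  show "\<forall>\<alpha>. \<alpha> \<bullet> adjoint (lie1 D0 D1 I I1 w) g = lie1 D0 D1 I I1 w \<alpha> \<bullet> g"
    using adjoint_works[OF lin] by blast
  fix c assume h: "\<forall>\<alpha>. \<alpha> \<bullet> c = lie1 D0 D1 I I1 w \<alpha> \<bullet> g"
  let ?d = "c - adjoint (lie1 D0 D1 I I1 w) g"
  have "?d \<bullet> ?d = 0" using h adjoint_works[OF lin] by (simp add: inner_diff_right)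
  then show "c = adjoint (lie1 D0 D1 I I1 w) g" by simp
qed

lemma gronwall0:
  fixes f f' :: "real \<Rightarrow> real"
  assumes der: "\<And>t. t \<in> {0..T} \<Longrightarrow> (f has_real_derivative f' t) (at t within {0..T})"
    and bd: "\<And>t. t \<in> {0..T} \<Longrightarrow> f' t \<le> K * f t"
    and f0: "f 0 = 0" and nn: "\<And>t. t \<in> {0..T} \<Longrightarrow> f t \<ge> 0"
    and t: "t \<in> {0..T}"
  shows "f t = 0"
proof -
  define g where "g s = f s * exp (- (K * s))" for s
  define g' where "g' s = f' s * exp (- (K * s)) - f s * (K * exp (- (K * s)))" for s
  have dg: "(g has_real_derivative g' s) (at s within {0..t})" if "s \<in> {0..t}" for s
  proof -
    have s: "s \<in> {0..T}" using that t by auto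
    have "(g has_real_derivative g' s) (at s within {0..T})"
      unfolding g_def g'_def
      by (rule derivative_eq_intros der[OF s] refl | simp)+
    then show ?thesis by (rule DERIV_subset) (use t in auto)
  qed
  have g'le: "g' s \<le> 0" if "s \<in> {0..t}" for s
  proof -
    have s: "s \<in> {0..T}" using that t by auto
    have "g' s = (f' s - K * f s) * exp (- (K * s))" by (simp add: g'_def algebra_simps)
    also have "\<dots> \<le> 0" using bd[OF s] by (simp add: mult_nonpos_nonneg)
    finally show ?thesis .
  qed
  obtain x where x: "x \<in> {0..t}" "g t - g 0 = (\<lambda>h. g' x * h) (t - 0)"
  proof -
    have "\<exists>x\<in>{0..t}. g t - g 0 = (\<lambda>h. g' x * h) (t - 0)"
      using t dg by (intro mvt_very_simple) (auto simp: has_field_derivative_def)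
    then show ?thesis using that by blast
  qed
  have "g t \<le> 0" using x g'le[OF x(1)] t f0 by (simp add: g_def mult_nonpos_nonneg)
  then have "f t \<le> 0" by (simp add: g_def mult_le_0_iff)
  with nn[OF t] show ?thesis by simp
qed

lemma norm_linear_bound:
  fixes L :: "real^'n \<Rightarrow> real^'m"
  assumes "linear L"
  shows "norm (L x) \<le> norm x * (\<Sum>i\<in>UNIV. norm (L (axis i 1)))"
proof -
  have "L x = L (\<Sum>i\<in>UNIV. x$i *s axis i 1)" by (simp add: basis_expansion)
  also have "\<dots> = (\<Sum>i\<in>UNIV. x$i *\<^sub>R L (axis i 1))"
    using assms by (simp add: linear_sum linear_scale scalar_mult_eq_scaleR)
  finally have "norm (L x) \<le> (\<Sum>i\<in>UNIV. norm (x$i *\<^sub>R L (axis i 1)))"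
    by (metis norm_sum)
  also have "\<dots> \<le> (\<Sum>i\<in>UNIV. norm x * norm (L (axis i 1)))"
    by (intro sum_mono) (simp add: mult_right_mono component_le_norm_cart)
  finally show ?thesis by (simp add: sum_distrib_left)
qed


theorem theorem3p5:
  fixes D0 :: "real^'n0^'n1" and D1 :: "real^'n1^'n2"
    and I :: "real^'n1 \<Rightarrow> real^'n2 \<Rightarrow> real^'n1"
    and I1 :: "real^'n1 \<Rightarrow> real^'n1 \<Rightarrow> real^'n0"
    and T :: real
    and v v' :: "real \<Rightarrow> real^'n1" and B :: "real \<Rightarrow> real^'n0"
    and \<gamma> \<gamma>' :: "real \<Rightarrow> real^'n1"
  assumes complex: "D1 ** D0 = 0"
    and I_linear: "\<And>w. linear (I w)"
    and I1_linear: "\<And>w. linear (I1 w)"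
    and I1_cont: "\<And>\<alpha>. continuous_on UNIV (\<lambda>w. I1 w \<alpha>)"
    and v_deriv: "\<And>t. t \<in> {0..T} \<Longrightarrow> (v has_vector_derivative v' t) (at t within {0..T})"
    and v'_cont: "continuous_on {0..T} v'"
    and B_cont: "continuous_on {0..T} B"
    and momentum: "\<And>t. t \<in> {0..T} \<Longrightarrow> v' t + I (v t) (D1 *v v t) + D0 *v B t = 0"
    and \<gamma>_deriv: "\<And>t. t \<in> {0..T} \<Longrightarrow> (\<gamma> has_vector_derivative \<gamma>' t) (at t within {0..T})"
    and \<gamma>'_cont: "continuous_on {0..T} \<gamma>'"
    and advected: "\<And>t. t \<in> {0..T} \<Longrightarrow> \<gamma>' t = lie_chain1 D0 D1 I I1 (v t) (\<gamma> t)"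
    and cycle0: "boundary D0 (\<gamma> 0) = 0"
  shows "\<forall>t\<in>{0..T}. ((\<lambda>s. circulation (v s) (\<gamma> s)) has_real_derivative 0) (at t within {0..T})"
proof
  let ?L = "\<lambda>w. lie1 D0 D1 I I1 w"
  have linL: "linear (?L w)" for w using lie1_linear[of I w I1 D0 D1] I_linear I1_linear by blast
  have adv: "\<gamma>' t = adjoint (?L (v t)) (\<gamma> t)" if "t \<in> {0..T}" for t
    using advected[OF that] lie_chain1_eq[of I "v t" I1] I_linear I1_linear by simp
  have tr: "(D0 *v x) \<bullet> y = x \<bullet> (transpose D0 *v y)" for x y
    by (metis dot_lmul_matrix inner_commute transpose_matrix_vector)
  have D10: "D1 *v (D0 *v x) = 0" for x
    by (simp add: matrix_vector_mul_assoc complex)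
  have I0: "I w 0 = 0" for w using I_linear linear_0 by blast
  have Lapp: "?L w (D0 *v x) = D0 *v (I1 w (D0 *v x))" for w x
    by (simp add: lie1_def D10 I0)
  define c where "c t = transpose D0 *v \<gamma> t" for t
  define f where "f t = c t \<bullet> c t" for t
  have dc: "(c has_vector_derivative transpose D0 *v \<gamma>' t) (at t within {0..T})"
    if "t \<in> {0..T}" for t
    unfolding c_def
    by (rule bounded_linear.has_vector_derivative[OF matrix_vector_mul_bounded_linear \<gamma>_deriv[OF that]])
  define f' where "f' t = 2 * (c t \<bullet> (transpose D0 *v \<gamma>' t))" for t
  have df: "(f has_real_derivative f' t) (at t within {0..T})" if "t \<in> {0..T}" for t
  proof -
    have "(f has_vector_derivative (c t \<bullet> (transpose D0 *v \<gamma>' t) + (transpose D0 *v \<gamma>' t) \<bullet> c t))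
       (at t within {0..T})"
      unfolding f_def[abs_def]
      by (rule bounded_bilinear.has_vector_derivative[OF bounded_bilinear_inner dc[OF that] dc[OF that]])
    then show ?thesis
      by (simp add: has_real_derivative_iff_has_vector_derivative f'_def inner_commute)
  qed
  have f'eq: "f' t = 2 * (I1 (v t) (D0 *v c t) \<bullet> c t)" if "t \<in> {0..T}" for t
  proof -
    have "c t \<bullet> (transpose D0 *v \<gamma>' t) = (D0 *v c t) \<bullet> \<gamma>' t" by (simp add: tr)
    also have "\<dots> = ?L (v t) (D0 *v c t) \<bullet> \<gamma> t"
      by (simp add: adv[OF that] adjoint_works[OF linL])
    also have "\<dots> = I1 (v t) (D0 *v c t) \<bullet> c t"
      by (simp add: Lapp tr c_def)
    finally show ?thesis by (simp add: f'_def)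
  qed
  define M where "M t = (\<Sum>i\<in>UNIV. norm (I1 (v t) (D0 *v axis i 1)))" for t
  have vcont: "continuous_on {0..T} v"
    using v_deriv by (rule continuous_on_vector_derivative)
  have Mcont: "continuous_on {0..T} M"
    unfolding M_def
    by (intro continuous_intros continuous_on_compose2[OF I1_cont vcont]) auto
  obtain K where K: "\<And>t. t \<in> {0..T} \<Longrightarrow> norm (M t) \<le> K"
    using compact_imp_bounded[OF compact_continuous_image[OF Mcont compact_Icc]]
    unfolding bounded_iff by blast
  have bd: "f' t \<le> (2 * K) * f t" if "t \<in> {0..T}" for t
  proof -
    have "I1 (v t) (D0 *v c t) \<bullet> c t \<le> norm (I1 (v t) (D0 *v c t)) * norm (c t)"
      by (rule norm_cauchy_schwarz)
    also have "norm (I1 (v t) (D0 *v c t)) \<le> norm (c t) * M t"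
      unfolding M_def
      by (rule norm_linear_bound[of "\<lambda>x. I1 (v t) (D0 *v x)"])
        (intro linear_compose[of "(*v) D0" "I1 (v t)", unfolded o_def] matrix_vector_mul_linear I1_linear)
    also have "M t \<le> K" using K[OF that] by simp
    finally have "I1 (v t) (D0 *v c t) \<bullet> c t \<le> norm (c t) * K * norm (c t)"
      by (simp add: mult_left_mono mult_right_mono)
    then show ?thesis
      by (simp add: f'eq[OF that] f_def power2_norm_eq_inner[symmetric] power2_eq_square algebra_simps)
  qed
  have c0: "c t = 0" if "t \<in> {0..T}" for t
  proof -
    have "f t = 0"
      by (rule gronwall0[of T f f' "2 * K"]) (use df bd that cycle0 in \<open>auto simp: f_def c_def boundary_def\<close>)
    then show ?thesis by (simp add: f_def)
  qed
  fix t assume t: "t \<in> {0..T}"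
  have "((\<lambda>s. v s \<bullet> \<gamma> s) has_vector_derivative (v t \<bullet> \<gamma>' t + v' t \<bullet> \<gamma> t)) (at t within {0..T})"
    by (rule bounded_bilinear.has_vector_derivative[OF bounded_bilinear_inner v_deriv[OF t] \<gamma>_deriv[OF t]])
  moreover have "v t \<bullet> \<gamma>' t + v' t \<bullet> \<gamma> t = 0"
  proof -
    have "v t \<bullet> \<gamma>' t + v' t \<bullet> \<gamma> t = (?L (v t) (v t) + v' t) \<bullet> \<gamma> t"
      by (simp add: adv[OF t] adjoint_works[OF linL] inner_add_left)
    also have "?L (v t) (v t) + v' t = D0 *v (I1 (v t) (v t) - B t)"
    proof -
      have m: "v' t = - (I (v t) (D1 *v v t) + D0 *v B t)"
        using momentum[OF t] unfolding add.assoc by (rule eq_neg_iff_add_eq_0[THEN iffD2])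
      show ?thesis by (simp add: lie1_def m matrix_vector_mult_diff_distrib)
    qed
    also have "(D0 *v (I1 (v t) (v t) - B t)) \<bullet> \<gamma> t = 0"
      using c0[OF t] by (simp add: tr c_def)
    finally show ?thesis .
  qed
  ultimately show "((\<lambda>s. circulation (v s) (\<gamma> s)) has_real_derivative 0) (at t within {0..T})"
    by (simp add: circulation_def pairing_inner has_real_derivative_iff_has_vector_derivative)
qed

end
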